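(* Let $\Omega=(a_1,b_1)\times\cdots\times(a_n,b_n)\subset\mathbb{R}^n$ be a bounded box with admissible mesh size vector $h$. (i) The first eigenvalue of $-\Delta_h$ on $\Omega_h$ with zero Dirichlet boundary conditions on $\partial\Omega_h$ is simple and equals $$\lambda_{1,h}=\sum_{i=1}^n\frac{4}{h_i^2}\sin^2\Big(\frac{\pi h_i}{2(b_i-a_i)}\Big)<\sum_{i=1}^n\frac{\pi^2}{(b_i-a_i)^2}=:\lambda_1,$$ with eigenfunction $\phi_{1,h}(x)=\prod_{i=1}^n\sin\frac{\pi(x_i-a_i)}{b_i-a_i}>0$ for $x\in\Omega_h$. (ii) Let $t>0$ be such that $\sum_{x\in\Omega_h}t\,\phi_{1,h}(x)\,\mathbf{h}=1$. Then $t\,\phi_{1,h}(x)\ge\frac{2^n}{|\Omega|^2}\operatorname{dist}(x,\partial\Omega_h)^n$ for all $x\in\Omega_h$.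
   Context: Admissible mesh: $h=(h_1,\dots,h_n)$, $h_i>0$, $a_i=k_ih_i$, $b_i=l_ih_i$, $k_i,l_i\in\mathbb{Z}$, $l_i-k_i>1$. $\mathbb{R}^n_h=\{(h_1z_1,\dots,h_nz_n):z_i\in\mathbb{Z}\}$, $\Omega_h=\Omega\cap\mathbb{R}^n_h$, $\partial\Omega_h=\partial\Omega\cap\mathbb{R}^n_h$, $\mathbf{h}=h_1\cdots h_n$, $|\Omega|=\prod_i(b_i-a_i)$. $\Delta_hu(x)=\sum_i\frac{u(x+h_ie_i)-2u(x)+u(x-h_ie_i)}{h_i^2}$. $\operatorname{dist}(x,\partial\Omega_h)$ is the Euclidean distance from $x$ to the set $\partial\Omega_h$. *)

theory Defs
  imports "HOL-Analysis.Analysis"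
begin

text \<open>Points of R^n are vectors of type real^'n; the dimension is n = CARD('n).
  The box Omega = (a_1,b_1) x ... x (a_n,b_n) is the open box  box a b.\<close>

definition admissible_mesh :: "real^'n \<Rightarrow> real^'n \<Rightarrow> real^'n \<Rightarrow> bool" where
  "admissible_mesh a b h \<longleftrightarrow>
     (\<forall>i. h$i > 0 \<and> (\<exists>k l :: int. a$i = of_int k * h$i \<and> b$i = of_int l * h$i \<and> l - k > 1))"

definition grid :: "real^'n \<Rightarrow> (real^'n) set" where
  "grid h = {x. \<forall>i. \<exists>z::int. x$i = h$i * of_int z}"

definition Omega_h :: "real^'n \<Rightarrow> real^'n \<Rightarrow> real^'n \<Rightarrow> (real^'n) set" where
  "Omega_h a b h = box a b \<inter> grid h"

definition bdry_h :: "real^'n \<Rightarrow> real^'n \<Rightarrow> real^'n \<Rightarrow> (real^'n) set" where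
  "bdry_h a b h = frontier (box a b) \<inter> grid h"

definition disc_lap :: "real^'n \<Rightarrow> (real^'n \<Rightarrow> real) \<Rightarrow> real^'n \<Rightarrow> real" where
  "disc_lap h u x = (\<Sum>i\<in>UNIV. (u (x + h$i *\<^sub>R axis i 1) - 2 * u x + u (x - h$i *\<^sub>R axis i 1)) / (h$i)^2)"

definition dir_eigenfun :: "real^'n \<Rightarrow> real^'n \<Rightarrow> real^'n \<Rightarrow> real \<Rightarrow> (real^'n \<Rightarrow> real) \<Rightarrow> bool" where
  "dir_eigenfun a b h lam u \<longleftrightarrow>
     (\<forall>x\<in>bdry_h a b h. u x = 0) \<and> (\<exists>x\<in>Omega_h a b h. u x \<noteq> 0) \<and>
     (\<forall>x\<in>Omega_h a b h. - disc_lap h u x = lam * u x)"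

definition dir_eigenvalue :: "real^'n \<Rightarrow> real^'n \<Rightarrow> real^'n \<Rightarrow> real \<Rightarrow> bool" where
  "dir_eigenvalue a b h lam \<longleftrightarrow> (\<exists>u. dir_eigenfun a b h lam u)"

definition first_simple_eigen :: "real^'n \<Rightarrow> real^'n \<Rightarrow> real^'n \<Rightarrow> real \<Rightarrow> (real^'n \<Rightarrow> real) \<Rightarrow> bool" where
  "first_simple_eigen a b h lam phi \<longleftrightarrow>
     dir_eigenfun a b h lam phi \<and>
     (\<forall>mu. dir_eigenvalue a b h mu \<longrightarrow> lam \<le> mu) \<and>
     (\<forall>u. dir_eigenfun a b h lam u \<longrightarrow> (\<exists>c. \<forall>x\<in>Omega_h a b h. u x = c * phi x))"

definition phi1 :: "real^'n \<Rightarrow> real^'n \<Rightarrow> real^'n \<Rightarrow> real" where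
  "phi1 a b x = (\<Prod>i\<in>UNIV. sin (pi * (x$i - a$i) / (b$i - a$i)))"

end

theory Submission
  imports Defs
begin


lemma axis_nth' [simp]: "axis i c $ j = (if j = i then c else 0)"
  by (simp add: axis_def)

lemma axis_shift_nth [simp]: "(x + c *\<^sub>R axis i 1) $ j = x $ j + (if j = i then c else 0)"
  "(x - c *\<^sub>R axis i 1) $ j = x $ j - (if j = i then c else 0)"
  by (auto simp: axis_def)

lemma adm_h: "admissible_mesh a b h \<Longrightarrow> 0 < h$i"
  by (auto simp: admissible_mesh_def)

lemma adm_kl:
  assumes "admissible_mesh a b h"
  obtains k l :: "'n::finite \<Rightarrow> int" where
    "\<And>i. a$i = of_int (k i) * h$i" "\<And>i. b$i = of_int (l i) * h$i" "\<And>i. l i - k i > 1"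
proof -
  have "\<forall>i. \<exists>kl::int\<times>int. a$i = of_int (fst kl) * h$i \<and> b$i = of_int (snd kl) * h$i \<and> snd kl - fst kl > 1"
    using assms by (fastforce simp: admissible_mesh_def)
  then obtain f where f: "\<And>i. a$i = of_int (fst (f i)) * h$i \<and> b$i = of_int (snd (f i)) * h$i \<and> snd (f i) - fst (f i) > 1"
    by metis
  show ?thesis by (rule that[of "\<lambda>i. fst (f i)" "\<lambda>i. snd (f i)"]) (use f in auto)
qed

lemma adm_ab: assumes "admissible_mesh a b h" shows "2 * h$i \<le> b$i - a$i"
proof -
  obtain k l where kl: "\<And>i. a$i = of_int (k i) * h$i" "\<And>i. b$i = of_int (l i) * h$i" "\<And>i. l i - k i > 1"
    using adm_kl[OF assms] by metis
  have "2 \<le> real_of_int (l i - k i)" using kl(3)[of i] by linarith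
  then have "2 * h$i \<le> real_of_int (l i - k i) * h$i" using adm_h[OF assms, of i] by simp
  then show ?thesis using kl(1,2)[of i] by (simp add: algebra_simps)
qed

lemma adm_ab': "admissible_mesh a b h \<Longrightarrow> a$i < b$i"
  using adm_ab[of a b h i] adm_h[of a b h i] by linarith

lemma grid_step:
  fixes hh p q :: real
  assumes "0 < hh" "p = hh * of_int z1" "q = hh * of_int z2" "p < q"
  shows "p + hh \<le> q"
proof -
  have "z1 < z2" using assms by (simp add: mult_less_cancel_left_pos)
  then have "real_of_int z1 + 1 \<le> of_int z2" by linarith
  then have "hh * (of_int z1 + 1) \<le> hh * of_int z2" using assms(1) by simp
  then show ?thesis using assms by (simp add: algebra_simps)
qed

lemma a_grid: "admissible_mesh a b h \<Longrightarrow> \<exists>z::int. a$i = h$i * of_int z"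
  by (auto simp: admissible_mesh_def mult.commute)
lemma b_grid: "admissible_mesh a b h \<Longrightarrow> \<exists>z::int. b$i = h$i * of_int z"
  by (auto simp: admissible_mesh_def mult.commute)

lemma grid_shift:
  assumes "x \<in> grid h"
  shows "x + h$i *\<^sub>R axis i 1 \<in> grid h" "x - h$i *\<^sub>R axis i 1 \<in> grid h"
proof -
  { fix j
    obtain z :: int where z: "x$j = h$j * of_int z" using assms by (auto simp: grid_def)
    have "\<exists>z'::int. (x + h$i *\<^sub>R axis i 1)$j = h$j * of_int z'"
      using z by (cases "j = i") (auto intro: exI[of _ "z+1"] exI[of _ z] simp: algebra_simps)
    moreover have "\<exists>z'::int. (x - h$i *\<^sub>R axis i 1)$j = h$j * of_int z'"
      using z by (cases "j = i") (auto intro: exI[of _ "z-1"] exI[of _ z] simp: algebra_simps)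
    ultimately have "(\<exists>z'::int. (x + h$i *\<^sub>R axis i 1)$j = h$j * of_int z') \<and> (\<exists>z'::int. (x - h$i *\<^sub>R axis i 1)$j = h$j * of_int z')" by blast }
  then show "x + h$i *\<^sub>R axis i 1 \<in> grid h" "x - h$i *\<^sub>R axis i 1 \<in> grid h"
    by (auto simp: grid_def)
qed

lemma bdry_char:
  assumes "admissible_mesh a b h"
  shows "bdry_h a b h = (cbox a b - box a b) \<inter> grid h"
proof -
  have "box a b \<noteq> {}" using adm_ab'[OF assms] by (auto simp: interval_eq_empty_cart not_le)
  then show ?thesis by (simp add: bdry_h_def frontier_def interior_open[OF open_box])
qed

lemma nb_mem:
  assumes adm: "admissible_mesh a b h" and x: "x \<in> Omega_h a b h"
  shows "x + h$i *\<^sub>R axis i 1 \<in> Omega_h a b h \<union> bdry_h a b h"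
        "x - h$i *\<^sub>R axis i 1 \<in> Omega_h a b h \<union> bdry_h a b h"
proof -
  have xb: "\<And>j. a$j < x$j \<and> x$j < b$j" using x by (auto simp: Omega_h_def mem_box_cart)
  have xg: "x \<in> grid h" using x by (auto simp: Omega_h_def)
  obtain zi where zi: "x$i = h$i * of_int zi" using xg by (auto simp: grid_def)
  obtain za where za: "a$i = h$i * of_int za" using a_grid[OF adm] by blast
  obtain zb where zb: "b$i = h$i * of_int zb" using b_grid[OF adm] by blast
  have hp: "0 < h$i" by (rule adm_h[OF adm])
  have u: "x$i + h$i \<le> b$i" using grid_step[OF hp zi zb] xb by blast
  have l: "a$i + h$i \<le> x$i" using grid_step[OF hp za zi] xb by blast
  have c1: "x + h$i *\<^sub>R axis i 1 \<in> cbox a b" using xb u hp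
    by (auto simp: mem_box_cart intro: less_imp_le) (smt (verit))
  have c2: "x - h$i *\<^sub>R axis i 1 \<in> cbox a b" using xb l hp
    by (auto simp: mem_box_cart intro: less_imp_le) (smt (verit))
  show "x + h$i *\<^sub>R axis i 1 \<in> Omega_h a b h \<union> bdry_h a b h"
       "x - h$i *\<^sub>R axis i 1 \<in> Omega_h a b h \<union> bdry_h a b h"
    using c1 c2 grid_shift[OF xg, of i] by (auto simp: bdry_char[OF adm] Omega_h_def)
qed



definition th :: "real^'n \<Rightarrow> real^'n \<Rightarrow> real^'n \<Rightarrow> 'n \<Rightarrow> real" where
  "th a b x j = pi * (x$j - a$j) / (b$j - a$j)"

lemma phi_split: "phi1 a b y = sin (th a b y i) * (\<Prod>j\<in>-{i}. sin (th a b y j))"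
  unfolding phi1_def th_def
  by (subst prod.remove[of UNIV i]) (auto simp: Compl_eq_Diff_UNIV)

lemma rest_shift: "(\<Prod>j\<in>-{i}. sin (th a b (x + c *\<^sub>R axis i 1) j)) = (\<Prod>j\<in>-{i}. sin (th a b x j))"
  "(\<Prod>j\<in>-{i}. sin (th a b (x - c *\<^sub>R axis i 1) j)) = (\<Prod>j\<in>-{i}. sin (th a b x j))"
  by (auto intro!: prod.cong simp: th_def)

lemma sin_id: "sin (t + 2 * be) - 2 * sin t + sin (t - 2 * be) = - 4 * (sin be)^2 * sin (t::real)"
proof -
  have h: "cos (2 * be) = 1 - 2 * (sin be)^2" by (rule cos_double_sin)
  show ?thesis unfolding sin_add sin_diff h by (simp add: algebra_simps)
qed

lemma lin_aux:
  fixes A B T P s hh :: real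
  assumes "A - 2 * T + B = - 4 * s^2 * T"
  shows "(A * P - 2 * (T * P) + B * P) / hh^2 = - (4 / hh^2 * s^2 * (T * P))"
proof -
  have "A * P - 2 * (T * P) + B * P = (A - 2 * T + B) * P" by (simp add: algebra_simps)
  also have "\<dots> = - 4 * s^2 * T * P" using assms by simp
  finally show ?thesis by (simp add: divide_simps)
qed

lemma phi_eig:
  "- disc_lap h (phi1 a b) x =
     (\<Sum>i\<in>UNIV. 4 / (h$i)^2 * (sin (pi * h$i / (2 * (b$i - a$i))))^2) * phi1 a b x"
proof -
  have trm: "(phi1 a b (x + h$i *\<^sub>R axis i 1) - 2 * phi1 a b x + phi1 a b (x - h$i *\<^sub>R axis i 1)) / (h$i)^2
     = - (4 / (h$i)^2 * (sin (pi * h$i / (2 * (b$i - a$i))))^2 * phi1 a b x)" for i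
  proof -
    let ?P = "\<Prod>j\<in>-{i}. sin (th a b x j)"
    let ?t = "th a b x i"
    let ?be = "pi * h$i / (2 * (b$i - a$i))"
    have tw: "2 * ?be = pi * h$i / (b$i - a$i)"
      by (cases "b$i - a$i = 0") (simp_all add: field_simps)
    have e1: "th a b (x + h$i *\<^sub>R axis i 1) i = ?t + 2 * ?be"
      unfolding tw by (simp add: th_def add_divide_distrib diff_divide_distrib algebra_simps)
    have e2: "th a b (x - h$i *\<^sub>R axis i 1) i = ?t - 2 * ?be"
      unfolding tw by (simp add: th_def add_divide_distrib diff_divide_distrib algebra_simps)
    have "sin (?t + 2 * ?be) - 2 * sin ?t + sin (?t - 2 * ?be) = - 4 * (sin ?be)^2 * sin ?t"
      by (rule sin_id)
    then show ?thesis
      apply (simp only: phi_split[of a b _ i] rest_shift e1 e2)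
      by (rule lin_aux[OF sin_id])
  qed
  show ?thesis
    unfolding disc_lap_def by (simp add: trm sum_distrib_right sum_negf)
qed



lemma th_range:
  assumes adm: "admissible_mesh a b h" and x: "x \<in> Omega_h a b h"
  shows "0 < th a b x i" "th a b x i < pi"
proof -
  have xb: "a$i < x$i" "x$i < b$i" using x by (auto simp: Omega_h_def mem_box_cart)
  have L: "0 < b$i - a$i" using adm_ab'[OF adm] by simp
  show "0 < th a b x i" unfolding th_def using xb L by simp
  have "(x$i - a$i) / (b$i - a$i) < 1" using xb L by simp
  then have "pi * ((x$i - a$i) / (b$i - a$i)) < pi * 1" by (intro mult_strict_left_mono) auto
  then show "th a b x i < pi" unfolding th_def by simp
qed

lemma phi_th: "phi1 a b x = (\<Prod>i\<in>UNIV. sin (th a b x i))"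
  by (simp add: phi1_def th_def)

lemma phi_pos: assumes "admissible_mesh a b h" "x \<in> Omega_h a b h" shows "0 < phi1 a b x"
proof -
  have "\<And>i. 0 < sin (th a b x i)" using sin_gt_zero th_range[OF assms] by blast
  then show ?thesis by (simp add: phi_th prod_pos)
qed

lemma phi_le1: assumes "admissible_mesh a b h" "x \<in> Omega_h a b h" shows "phi1 a b x \<le> 1"
proof -
  have "\<And>i. 0 < sin (th a b x i)" using sin_gt_zero th_range[OF assms] by blast
  then show ?thesis unfolding phi_th by (intro prod_le_1) (auto intro: less_imp_le)
qed

lemma phi_bdry:
  assumes adm: "admissible_mesh a b h" and y: "y \<in> bdry_h a b h"
  shows "phi1 a b y = 0"
proof -
  have "y \<in> cbox a b" "y \<notin> box a b" using y by (auto simp: bdry_char[OF adm])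
  then obtain i where "y$i = a$i \<or> y$i = b$i" unfolding mem_box_cart
    by (metis order_less_le)
  moreover have L: "b$i - a$i \<noteq> 0" using adm_ab'[OF adm, of i] by simp
  ultimately have "sin (th a b y i) = 0" by (auto simp: th_def)
  then show ?thesis unfolding phi_th by (auto intro: prod_zero)
qed

lemma corner_in:
  assumes adm: "admissible_mesh a b h"
  shows "a + h \<in> Omega_h a b h"
proof -
  have "\<forall>i. a$i < (a+h)$i \<and> (a+h)$i < b$i"
    using adm_h[OF adm] adm_ab[OF adm] by (auto, smt (verit))
  moreover have "a + h \<in> grid h"
  proof -
    { fix i obtain z::int where "a$i = h$i * of_int z" using a_grid[OF adm] by blast
      then have "\<exists>z::int. (a+h)$i = h$i * of_int z" by (auto intro!: exI[of _ "z+1"] simp: algebra_simps) }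
    then show ?thesis by (auto simp: grid_def)
  qed
  ultimately show ?thesis by (auto simp: Omega_h_def mem_box_cart)
qed

lemma Omega_sub:
  assumes adm: "admissible_mesh a b h"
    and k: "\<And>i. a$i = of_int (k i) * h$i" and l: "\<And>i. b$i = of_int (l i) * h$i"
  shows "Omega_h a b h \<subseteq> vec_lambda ` (PiE UNIV (\<lambda>i. (\<lambda>z::int. h$i * of_int z) ` {k i + 1 .. l i - 1}))"
proof
  fix x assume x: "x \<in> Omega_h a b h"
  have "(\<lambda>i. x$i) \<in> PiE UNIV (\<lambda>i. (\<lambda>z::int. h$i * of_int z) ` {k i + 1 .. l i - 1})"
  proof (rule PiE_I)
    fix i :: 'a
    obtain z::int where z: "x$i = h$i * of_int z" using x by (auto simp: Omega_h_def grid_def)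
    have hp: "0 < h$i" by (rule adm_h[OF adm])
    have "a$i < x$i" "x$i < b$i" using x by (auto simp: Omega_h_def mem_box_cart)
    then have "of_int (k i) * h$i < of_int z * h$i" "of_int z * h$i < of_int (l i) * h$i"
      using k l z by (auto simp: mult.commute)
    then have "k i < z" "z < l i" using hp by (simp_all add: mult_less_cancel_right_pos)
    then show "x$i \<in> (\<lambda>z::int. h$i * of_int z) ` {k i + 1 .. l i - 1}" using z by auto
  qed auto
  then show "x \<in> vec_lambda ` (PiE UNIV (\<lambda>i. (\<lambda>z::int. h$i * of_int z) ` {k i + 1 .. l i - 1}))"
    by (metis (no_types) image_eqI vec_nth_inverse)
qed

lemma Omega_finite_card:
  assumes adm: "admissible_mesh a b h"
  shows "finite (Omega_h a b h)"
    and "real (card (Omega_h a b h)) * (\<Prod>i\<in>UNIV. h$i) \<le> (\<Prod>i\<in>UNIV. b$i - a$i)"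
proof -
  obtain k l where k: "\<And>i. a$i = of_int (k i) * h$i" and l: "\<And>i. b$i = of_int (l i) * h$i"
    and kl: "\<And>i. l i - k i > 1"
    using adm_kl[OF adm] by metis
  let ?S = "\<lambda>i. (\<lambda>z::int. h$i * of_int z) ` {k i + 1 .. l i - 1}"
  have sub: "Omega_h a b h \<subseteq> vec_lambda ` (PiE UNIV ?S)" by (rule Omega_sub[OF adm k l])
  have fin: "finite (PiE UNIV ?S)" by (intro finite_PiE) auto
  show "finite (Omega_h a b h)" using sub fin finite_subset by blast
  have "card (Omega_h a b h) \<le> card (vec_lambda ` (PiE UNIV ?S))"
    by (rule card_mono[OF _ sub]) (use fin in auto)
  also have "\<dots> \<le> card (PiE UNIV ?S)" by (rule card_image_le[OF fin])
  also have "\<dots> = (\<Prod>i\<in>UNIV. card (?S i))" by (simp add: card_PiE)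
  also have "\<dots> \<le> (\<Prod>i\<in>UNIV. nat (l i - k i - 1))"
    by (intro prod_mono conjI) (auto intro!: order.trans[OF card_image_le] simp: card_atLeastAtMost_int)
  finally have c: "real (card (Omega_h a b h)) \<le> (\<Prod>i\<in>UNIV. real (nat (l i - k i - 1)))"
    by (metis of_nat_le_iff of_nat_prod)
  have hpos: "0 \<le> (\<Prod>i\<in>UNIV. h$i)" using adm_h[OF adm] by (intro prod_nonneg) (auto intro: less_imp_le)
  have "real (card (Omega_h a b h)) * (\<Prod>i\<in>UNIV. h$i) \<le> (\<Prod>i\<in>UNIV. real (nat (l i - k i - 1))) * (\<Prod>i\<in>UNIV. h$i)"
    by (rule mult_right_mono[OF c hpos])
  also have "\<dots> = (\<Prod>i\<in>UNIV. real (nat (l i - k i - 1)) * h$i)" by (simp add: prod.distrib)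
  also have "\<dots> \<le> (\<Prod>i\<in>UNIV. b$i - a$i)"
  proof (rule prod_mono, rule conjI)
    fix i
    have hp: "0 < h$i" by (rule adm_h[OF adm])
    have e: "real (nat (l i - k i - 1)) = of_int (l i) - of_int (k i) - 1" using kl[of i] by simp
    show "0 \<le> real (nat (l i - k i - 1)) * h$i" using hp by simp
    show "real (nat (l i - k i - 1)) * h$i \<le> b$i - a$i"
      unfolding e k l using hp by (simp add: algebra_simps)
  qed
  finally show "real (card (Omega_h a b h)) * (\<Prod>i\<in>UNIV. h$i) \<le> (\<Prod>i\<in>UNIV. b$i - a$i)" .
qed



lemma disc_lap_lin:
  "disc_lap h (\<lambda>x. M * f x - g x) x = M * disc_lap h f x - disc_lap h g x"
  unfolding disc_lap_def sum_distrib_left sum_subtractf[symmetric]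
  by (rule sum.cong) (simp_all add: diff_divide_distrib add_divide_distrib right_diff_distrib distrib_left)

lemma disc_lap_neg: "disc_lap h (\<lambda>x. - g x) x = - disc_lap h g x"
  using disc_lap_lin[of h 0 "\<lambda>_. 0" g x] by simp

lemma eigen_neg: "dir_eigenfun a b h mu u \<Longrightarrow> dir_eigenfun a b h mu (\<lambda>x. - u x)"
  unfolding dir_eigenfun_def disc_lap_neg by auto

lemma max_ratio:
  fixes f :: "'a \<Rightarrow> real"
  assumes "finite S" "S \<noteq> {}"
  obtains x0 where "x0 \<in> S" "\<And>y. y \<in> S \<Longrightarrow> f y \<le> f x0"
proof -
  have "Max (f ` S) \<in> f ` S" using assms by auto
  then obtain x0 where "x0 \<in> S" "f x0 = Max (f ` S)" by auto
  then show ?thesis using assms by (intro that[of x0]) auto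
qed

lemma key_ineq:
  assumes adm: "admissible_mesh a b h"
    and u: "\<forall>x\<in>bdry_h a b h. u x = 0"
    and x0: "x0 \<in> Omega_h a b h"
    and mx: "\<And>y. y \<in> Omega_h a b h \<Longrightarrow> u y / phi1 a b y \<le> M"
    and eq: "u x0 = M * phi1 a b x0"
  shows "disc_lap h u x0 \<le> M * disc_lap h (phi1 a b) x0"
proof -
  have nb: "u y \<le> M * phi1 a b y" if "y \<in> Omega_h a b h \<union> bdry_h a b h" for y
  proof (cases "y \<in> Omega_h a b h")
    case True
    then show ?thesis using mx[OF True] phi_pos[OF adm True] by (simp add: pos_divide_le_eq)
  next
    case False
    then have "y \<in> bdry_h a b h" using that by auto
    then show ?thesis using u phi_bdry[OF adm] by simp
  qed
  show ?thesis unfolding disc_lap_def sum_distrib_left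
  proof (rule sum_mono)
    fix i
    have hp: "0 < (h$i)^2" using adm_h[OF adm, of i] by simp
    have "u (x0 + h$i *\<^sub>R axis i 1) - 2 * u x0 + u (x0 - h$i *\<^sub>R axis i 1)
      \<le> M * (phi1 a b (x0 + h$i *\<^sub>R axis i 1) - 2 * phi1 a b x0 + phi1 a b (x0 - h$i *\<^sub>R axis i 1))"
      using nb[OF nb_mem(1)[OF adm x0, of i]] nb[OF nb_mem(2)[OF adm x0, of i]] eq
      by (simp add: algebra_simps)
    then show "(u (x0 + h$i *\<^sub>R axis i 1) - 2 * u x0 + u (x0 - h$i *\<^sub>R axis i 1)) / (h$i)^2
      \<le> M * ((phi1 a b (x0 + h$i *\<^sub>R axis i 1) - 2 * phi1 a b x0 + phi1 a b (x0 - h$i *\<^sub>R axis i 1)) / (h$i)^2)"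
      using hp by (metis divide_right_mono less_imp_le times_divide_eq_right)
  qed
qed



abbreviation lam1 :: "real^'n \<Rightarrow> real^'n \<Rightarrow> real^'n \<Rightarrow> real" where
  "lam1 a b h \<equiv> (\<Sum>i\<in>UNIV. 4 / (h$i)^2 * (sin (pi * h$i / (2 * (b$i - a$i))))^2)"

lemma alg_aux:
  fixes D E M mu u0 L p :: real
  assumes "D \<le> M * E" "- D = mu * u0" "- E = L * p" "u0 = M * p"
  shows "L * u0 \<le> mu * u0"
proof -
  have "L * u0 = M * (- E)" using assms(3,4) by (simp add: algebra_simps)
  then show ?thesis using assms(1,2) by simp
qed

lemma max_point:
  assumes adm: "admissible_mesh a b h"
  obtains x0 where "x0 \<in> Omega_h a b h"
    "\<And>y. y \<in> Omega_h a b h \<Longrightarrow> u y / phi1 a b y \<le> u x0 / phi1 a b x0"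
  using max_ratio[OF Omega_finite_card(1)[OF adm], of "\<lambda>y. u y / phi1 a b y"] corner_in[OF adm]
  by blast

lemma min_pos:
  assumes adm: "admissible_mesh a b h" and u: "dir_eigenfun a b h mu u"
    and pos: "x \<in> Omega_h a b h" "0 < u x"
  shows "lam1 a b h \<le> mu"
proof -
  obtain x0 where x0: "x0 \<in> Omega_h a b h"
    and mx: "\<And>y. y \<in> Omega_h a b h \<Longrightarrow> u y / phi1 a b y \<le> u x0 / phi1 a b x0"
    using max_point[OF adm] by blast
  define M where "M = u x0 / phi1 a b x0"
  have p0: "0 < phi1 a b x0" by (rule phi_pos[OF adm x0])
  have eq: "u x0 = M * phi1 a b x0" using p0 by (simp add: M_def)
  have "0 < u x / phi1 a b x" using pos phi_pos[OF adm pos(1)] by simp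
  then have Mp: "0 < M" using mx[OF pos(1)] by (simp add: M_def)
  have u0: "0 < u x0" using eq Mp p0 by simp
  have ub: "\<forall>x\<in>bdry_h a b h. u x = 0" using u by (simp add: dir_eigenfun_def)
  have "disc_lap h u x0 \<le> M * disc_lap h (phi1 a b) x0"
    by (rule key_ineq[OF adm ub x0 _ eq]) (use mx in \<open>simp add: M_def\<close>)
  moreover have "- disc_lap h u x0 = mu * u x0" using u x0 by (simp add: dir_eigenfun_def)
  moreover have "- disc_lap h (phi1 a b) x0 = lam1 a b h * phi1 a b x0" by (rule phi_eig)
  ultimately have "lam1 a b h * u x0 \<le> mu * u x0" using eq by (rule alg_aux)
  then show ?thesis using u0 by simp
qed

lemma min_eig:
  assumes adm: "admissible_mesh a b h" and u: "dir_eigenfun a b h mu u"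
  shows "lam1 a b h \<le> mu"
proof -
  obtain x where x: "x \<in> Omega_h a b h" "u x \<noteq> 0" using u by (auto simp: dir_eigenfun_def)
  show ?thesis
  proof (cases "0 < u x")
    case True then show ?thesis using min_pos[OF adm u x(1)] by simp
  next
    case False then have "0 < - u x" using x by simp
    then show ?thesis using min_pos[OF adm eigen_neg[OF u] x(1)] by simp
  qed
qed

lemma propagate:
  assumes adm: "admissible_mesh a b h"
    and nn: "\<And>y. y \<in> Omega_h a b h \<Longrightarrow> 0 \<le> v y"
    and bd: "\<And>y. y \<in> bdry_h a b h \<Longrightarrow> v y = 0"
    and ev: "- disc_lap h v x = lam * v x"
    and x: "x \<in> Omega_h a b h" and z: "v x = 0"
  shows "v (x + h$i *\<^sub>R axis i 1) = 0 \<and> v (x - h$i *\<^sub>R axis i 1) = 0"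
proof -
  have nn': "0 \<le> v y" if "y \<in> Omega_h a b h \<union> bdry_h a b h" for y
    using that nn bd by fastforce
  let ?f = "\<lambda>j. (v (x + h$j *\<^sub>R axis j 1) - 2 * v x + v (x - h$j *\<^sub>R axis j 1)) / (h$j)^2"
  have fnn: "\<forall>j\<in>UNIV. 0 \<le> ?f j"
    using nn'[OF nb_mem(1)[OF adm x]] nn'[OF nb_mem(2)[OF adm x]] z by simp
  have "sum ?f UNIV = 0" using ev z by (simp add: disc_lap_def)
  then have "\<forall>j\<in>UNIV. ?f j = 0" using sum_nonneg_eq_0_iff[of UNIV ?f] fnn by simp
  then have "?f i = 0" by blast
  then have "v (x + h$i *\<^sub>R axis i 1) + v (x - h$i *\<^sub>R axis i 1) = 0"
    using adm_h[OF adm, of i] z by simp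
  then show ?thesis
    using nn'[OF nb_mem(1)[OF adm x, of i]] nn'[OF nb_mem(2)[OF adm x, of i]] by linarith
qed



lemma conn:
  assumes adm: "admissible_mesh a b h"
    and sp: "\<And>x i. x \<in> Omega_h a b h \<Longrightarrow> P x \<Longrightarrow> x + h$i *\<^sub>R axis i 1 \<in> Omega_h a b h \<Longrightarrow> P (x + h$i *\<^sub>R axis i 1)"
    and sm: "\<And>x i. x \<in> Omega_h a b h \<Longrightarrow> P x \<Longrightarrow> x - h$i *\<^sub>R axis i 1 \<in> Omega_h a b h \<Longrightarrow> P (x - h$i *\<^sub>R axis i 1)"
    and x0: "x0 \<in> Omega_h a b h" "P x0"
    and y: "y \<in> Omega_h a b h"
  shows "P y"
proof -
  define D where "D x = (\<Sum>i\<in>UNIV. \<bar>x$i - y$i\<bar> / h$i)" for x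
  have hp: "\<And>i. 0 < h$i" by (rule adm_h[OF adm])
  have "\<forall>x. x \<in> Omega_h a b h \<longrightarrow> P x \<longrightarrow> D x \<le> real n \<longrightarrow> P y" for n
  proof (induction n)
    case 0
    show ?case
    proof (intro allI impI)
      fix x assume x: "x \<in> Omega_h a b h" "P x" "D x \<le> real 0"
      have nn: "\<forall>i\<in>UNIV. 0 \<le> \<bar>x$i - y$i\<bar> / h$i" using hp by (simp add: less_imp_le)
      have "D x = 0" using x(3) nn unfolding D_def by (simp add: sum_nonneg antisym)
      then have "\<forall>i\<in>UNIV. \<bar>x$i - y$i\<bar> / h$i = 0" unfolding D_def
        using sum_nonneg_eq_0_iff[of UNIV "\<lambda>i. \<bar>x$i - y$i\<bar> / h$i"] nn by simp
      then have "x = y" using hp by (simp add: vec_eq_iff) (metis less_irrefl)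
      then show "P y" using x by simp
    qed
  next
    case (Suc n)
    show ?case
    proof (intro allI impI)
      fix x assume x: "x \<in> Omega_h a b h" "P x" "D x \<le> real (Suc n)"
      show "P y"
      proof (cases "x = y")
        case True then show ?thesis using x by simp
      next
        case False
        then obtain i where ne: "x$i \<noteq> y$i" by (auto simp: vec_eq_iff)
        have xb: "\<And>j. a$j < x$j \<and> x$j < b$j" using x by (auto simp: Omega_h_def mem_box_cart)
        have yb: "\<And>j. a$j < y$j \<and> y$j < b$j" using y by (auto simp: Omega_h_def mem_box_cart)
        have xg: "x \<in> grid h" using x by (auto simp: Omega_h_def)
        obtain zx::int where zx: "x$i = h$i * of_int zx" using xg by (auto simp: grid_def)
        obtain zy::int where zy: "y$i = h$i * of_int zy" using y by (auto simp: Omega_h_def grid_def)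
        show ?thesis
        proof (cases "x$i < y$i")
          case True
          let ?x' = "x + h$i *\<^sub>R axis i 1"
          have st: "x$i + h$i \<le> y$i" by (rule grid_step[OF hp zx zy True])
          have inb: "?x' \<in> box a b" unfolding mem_box_cart
          proof
            fix j show "a$j < ?x'$j \<and> ?x'$j < b$j"
              using xb[of j] yb[of j] xb[of i] yb[of i] st hp[of i] by (cases "j = i") auto
          qed
          have x'in: "?x' \<in> Omega_h a b h" using inb grid_shift(1)[OF xg] by (simp add: Omega_h_def)
          have Px': "P ?x'" by (rule sp[OF x(1,2) x'in])
          have "D ?x' = (\<Sum>j\<in>UNIV. \<bar>x$j - y$j\<bar> / h$j - (if j = i then 1 else 0))"
            unfolding D_def
          proof (rule sum.cong)
            fix j
            show "\<bar>?x'$j - y$j\<bar> / h$j = \<bar>x$j - y$j\<bar> / h$j - (if j = i then 1 else 0)"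
            proof (cases "j = i")
              case True
              have "\<bar>x$i + h$i - y$i\<bar> = \<bar>x$i - y$i\<bar> - h$i" using st \<open>x$i < y$i\<close> by simp
              then show ?thesis using True hp[of i] by (simp add: diff_divide_distrib)
            qed simp
          qed simp
          also have "\<dots> = D x - 1" unfolding D_def by (simp add: sum_subtractf)
          finally have "D ?x' \<le> real n" using x(3) by simp
          then show ?thesis using Suc.IH x'in Px' by blast
        next
          case False
          then have lt: "y$i < x$i" using ne by simp
          let ?x' = "x - h$i *\<^sub>R axis i 1"
          have st: "y$i + h$i \<le> x$i" by (rule grid_step[OF hp zy zx lt])
          have inb: "?x' \<in> box a b" unfolding mem_box_cart
          proof
            fix j show "a$j < ?x'$j \<and> ?x'$j < b$j"
              using xb[of j] yb[of j] xb[of i] yb[of i] st hp[of i] by (cases "j = i") auto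
          qed
          have x'in: "?x' \<in> Omega_h a b h" using inb grid_shift(2)[OF xg] by (simp add: Omega_h_def)
          have Px': "P ?x'" by (rule sm[OF x(1,2) x'in])
          have "D ?x' = (\<Sum>j\<in>UNIV. \<bar>x$j - y$j\<bar> / h$j - (if j = i then 1 else 0))"
            unfolding D_def
          proof (rule sum.cong)
            fix j
            show "\<bar>?x'$j - y$j\<bar> / h$j = \<bar>x$j - y$j\<bar> / h$j - (if j = i then 1 else 0)"
            proof (cases "j = i")
              case True
              have "\<bar>x$i - h$i - y$i\<bar> = \<bar>x$i - y$i\<bar> - h$i" using st lt by simp
              then show ?thesis using True hp[of i] by (simp add: diff_divide_distrib)
            qed simp
          qed simp
          also have "\<dots> = D x - 1" unfolding D_def by (simp add: sum_subtractf)
          finally have "D ?x' \<le> real n" using x(3) by simp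
          then show ?thesis using Suc.IH x'in Px' by blast
        qed
      qed
    qed
  qed
  moreover obtain n where "D x0 \<le> real n" using real_arch_simple by blast
  ultimately show ?thesis using x0 by blast
qed



lemma sin_lt_self: assumes "0 < (y::real)" "y < pi" shows "sin y < y"
proof -
  let ?s = "sin (y/2)" and ?c = "cos (y/2)"
  have s: "0 < ?s" using assms by (intro sin_gt_zero) auto
  have sl: "?s \<le> y/2" using assms by (intro sin_x_le_x) auto
  have "?c^2 = 1 - ?s^2" by (simp add: cos_squared_eq)
  then have "?c^2 < 1" using s by simp
  then have c: "?c < 1"
  proof -
    assume h: "?c^2 < 1"
    show "?c < 1"
    proof (rule ccontr)
      assume "\<not> ?c < 1" then have "?c = 1" using cos_le_one[of "y/2"] by linarith
      then show False using h by simp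
    qed
  qed
  have "sin y = 2 * ?s * ?c" using sin_double[of "y/2"] by simp
  also have "\<dots> < 2 * ?s" using s c by simp
  also have "\<dots> \<le> y" using sl by simp
  finally show ?thesis .
qed

lemma lin2:
  fixes Dv Dp Du M L p u :: real
  assumes "Dv = M * Dp - Du" "- Du = L * u" "- Dp = L * p"
  shows "- Dv = L * (M * p - u)"
proof -
  have "Dp = - (L * p)" "Du = - (L * u)" using assms(2,3) by linarith+
  then show ?thesis using assms(1) by (simp add: algebra_simps)
qed

lemma simple_eig:
  assumes adm: "admissible_mesh a b h" and u: "dir_eigenfun a b h (lam1 a b h) u"
  shows "\<exists>c. \<forall>x\<in>Omega_h a b h. u x = c * phi1 a b x"
proof -
  obtain x0 where x0: "x0 \<in> Omega_h a b h"
    and mx: "\<And>y. y \<in> Omega_h a b h \<Longrightarrow> u y / phi1 a b y \<le> u x0 / phi1 a b x0"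
    using max_point[OF adm] by blast
  define M where "M = u x0 / phi1 a b x0"
  define v where "v x = M * phi1 a b x - u x" for x
  have nn: "0 \<le> v y" if "y \<in> Omega_h a b h" for y
    using mx[OF that] phi_pos[OF adm that] by (simp add: v_def M_def pos_divide_le_eq)
  have bd: "v y = 0" if "y \<in> bdry_h a b h" for y
    using that u phi_bdry[OF adm] by (simp add: v_def dir_eigenfun_def)
  have ev: "- disc_lap h v x = lam1 a b h * v x" if "x \<in> Omega_h a b h" for x
  proof -
    have "disc_lap h v x = M * disc_lap h (phi1 a b) x - disc_lap h u x"
      unfolding v_def[abs_def] by (rule disc_lap_lin)
    moreover have "- disc_lap h u x = lam1 a b h * u x" using u that by (simp add: dir_eigenfun_def)
    moreover have "- disc_lap h (phi1 a b) x = lam1 a b h * phi1 a b x" by (rule phi_eig)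
    ultimately show ?thesis unfolding v_def by (rule lin2)
  qed
  have v0: "v x0 = 0" using phi_pos[OF adm x0] by (simp add: v_def M_def)
  have all: "v y = 0" if "y \<in> Omega_h a b h" for y
  proof (rule conn[where P = "\<lambda>x. v x = 0", OF adm _ _ x0 v0 that])
    fix x i assume "x \<in> Omega_h a b h" "v x = 0"
    then show "v (x + h$i *\<^sub>R axis i 1) = 0" "v (x - h$i *\<^sub>R axis i 1) = 0"
      using propagate[OF adm nn bd ev] by blast+
  qed
  show ?thesis using all by (intro exI[of _ M]) (simp add: v_def)
qed

lemma sq_aux: fixes hh LL :: real assumes "hh \<noteq> 0" "LL \<noteq> 0"
  shows "4 / hh^2 * (pi * hh / (2 * LL))^2 = pi^2 / LL^2"
  using assms by (simp add: power_divide power_mult_distrib)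

lemma lam_lt:
  assumes adm: "admissible_mesh a b h"
  shows "lam1 a b h < (\<Sum>i\<in>UNIV. pi^2 / (b$i - a$i)^2)"
proof (rule sum_strict_mono)
  fix i :: 'a
  have hp: "0 < h$i" by (rule adm_h[OF adm])
  have L: "2 * h$i \<le> b$i - a$i" by (rule adm_ab[OF adm])
  define y where "y = pi * h$i / (2 * (b$i - a$i))"
  have yp: "0 < y" using hp L by (simp add: y_def)
  have "h$i / (b$i - a$i) \<le> 1" using hp L by simp
  moreover have "y = pi / 2 * (h$i / (b$i - a$i))" unfolding y_def by simp
  ultimately have "y \<le> pi / 2" using mult_left_le[of "h$i / (b$i - a$i)" "pi/2"] by simp
  then have ypi: "y < pi" using pi_gt_zero by linarith
  have sp: "0 < sin y" using yp ypi by (intro sin_gt_zero)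
  have "(sin y)^2 < y^2" using sin_lt_self[OF yp ypi] sp by (intro power_strict_mono) auto
  then have "4 / (h$i)^2 * (sin y)^2 < 4 / (h$i)^2 * y^2" using hp by (intro mult_strict_left_mono) auto
  also have "4 / (h$i)^2 * y^2 = pi^2 / (b$i - a$i)^2"
    using hp L unfolding y_def by (intro sq_aux) auto
  finally show "4 / (h$i)^2 * (sin (pi * h$i / (2 * (b$i - a$i))))^2 < pi^2 / (b$i - a$i)^2"
    by (simp add: y_def)
qed auto



lemma jordan_aux:
  fixes u :: real assumes "0 \<le> u" "u \<le> 1"
  shows "u \<le> sin (u * (pi/2))"
proof -
  have cv: "convex_on {0..pi} (\<lambda>x. - sin x)"
    by (rule f''_ge0_imp_convex[where f' = "\<lambda>x. - cos x" and f'' = "\<lambda>x. sin x"])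
       (auto intro!: derivative_eq_intros sin_ge_zero)
  have "- sin ((1 - u) *\<^sub>R 0 + u *\<^sub>R (pi/2)) \<le> (1 - u) * (- sin 0) + u * (- sin (pi/2))"
    by (rule convex_onD[OF cv]) (use assms in auto)
  then show ?thesis by (simp add: mult.commute)
qed

lemma sin_pi_ge:
  fixes s :: real assumes "0 \<le> s" "s \<le> 1"
  shows "2 * min s (1 - s) \<le> sin (pi * s)"
proof (cases "s \<le> 1/2")
  case True
  then show ?thesis using jordan_aux[of "2 * s"] assms by (simp add: algebra_simps min_def)
next
  case False
  have "sin (pi * s) = sin (pi * (1 - s))" by (simp add: algebra_simps sin_diff)
  then show ?thesis using jordan_aux[of "2 * (1 - s)"] assms False by (simp add: algebra_simps min_def)
qed



lemma infdist_le_side: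
  assumes adm: "admissible_mesh a b h" and x: "x \<in> Omega_h a b h"
  shows "infdist x (bdry_h a b h) \<le> x$i - a$i" "infdist x (bdry_h a b h) \<le> b$i - x$i"
proof -
  have xb: "\<And>j. a$j < x$j \<and> x$j < b$j" using x by (auto simp: Omega_h_def mem_box_cart)
  have xg: "x \<in> grid h" using x by (auto simp: Omega_h_def)
  let ?ya = "x - (x$i - a$i) *\<^sub>R axis i 1"
  let ?yb = "x + (b$i - x$i) *\<^sub>R axis i 1"
  have ya: "?ya \<in> bdry_h a b h"
    unfolding bdry_char[OF adm]
  proof (intro IntI DiffI)
    show "?ya \<in> cbox a b" unfolding mem_box_cart
    proof
      fix j show "a$j \<le> ?ya$j \<and> ?ya$j \<le> b$j"
        using xb[of j] xb[of i] by (cases "j = i") (simp_all add: less_imp_le)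
    qed
    show "?ya \<notin> box a b" unfolding mem_box_cart by auto
    show "?ya \<in> grid h" unfolding grid_def
    proof (intro CollectI allI)
      fix j show "\<exists>z::int. ?ya$j = h$j * of_int z"
      proof (cases "j = i")
        case True then show ?thesis using a_grid[OF adm, of i] by simp
      next
        case False
        obtain z::int where "x$j = h$j * of_int z" using xg unfolding grid_def by blast
        then show ?thesis using False by simp
      qed
    qed
  qed
  have yb: "?yb \<in> bdry_h a b h"
    unfolding bdry_char[OF adm]
  proof (intro IntI DiffI)
    show "?yb \<in> cbox a b" unfolding mem_box_cart
    proof
      fix j show "a$j \<le> ?yb$j \<and> ?yb$j \<le> b$j"
        using xb[of j] xb[of i] by (cases "j = i") (simp_all add: less_imp_le)
    qed
    show "?yb \<notin> box a b" unfolding mem_box_cart by auto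
    show "?yb \<in> grid h" unfolding grid_def
    proof (intro CollectI allI)
      fix j show "\<exists>z::int. ?yb$j = h$j * of_int z"
      proof (cases "j = i")
        case True then show ?thesis using b_grid[OF adm, of i] by simp
      next
        case False
        obtain z::int where "x$j = h$j * of_int z" using xg unfolding grid_def by blast
        then show ?thesis using False by simp
      qed
    qed
  qed
  have "x - ?ya = (x$i - a$i) *\<^sub>R axis i 1" by simp
  then have "dist x ?ya = x$i - a$i" using xb[of i] by (simp only: dist_norm norm_scaleR norm_axis_1) simp
  then show "infdist x (bdry_h a b h) \<le> x$i - a$i" using infdist_le[OF ya, of x] by simp
  have "x - ?yb = - ((b$i - x$i) *\<^sub>R axis i 1)" by simp
  then have "dist x ?yb = b$i - x$i" using xb[of i] by (simp only: dist_norm norm_minus_cancel norm_scaleR norm_axis_1) simp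
  then show "infdist x (bdry_h a b h) \<le> b$i - x$i" using infdist_le[OF yb, of x] by simp
qed

lemma phi_lower:
  assumes adm: "admissible_mesh a b h" and x: "x \<in> Omega_h a b h"
  shows "(2 * infdist x (bdry_h a b h)) ^ CARD('n) / (\<Prod>i\<in>UNIV. b$i - a$i) \<le> phi1 a b (x::real^'n)"
proof -
  let ?d = "infdist x (bdry_h a b h)"
  have d0: "0 \<le> ?d" by (rule infdist_nonneg)
  have "(\<Prod>i\<in>UNIV. 2 * ?d / (b$i - a$i)) \<le> (\<Prod>i\<in>UNIV. sin (th a b x i))"
  proof (rule prod_mono, rule conjI)
    fix i
    have L: "0 < b$i - a$i" using adm_ab'[OF adm, of i] by simp
    have xb: "a$i < x$i" "x$i < b$i" using x by (auto simp: Omega_h_def mem_box_cart)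
    show "0 \<le> 2 * ?d / (b$i - a$i)" using d0 L by simp
    define s where "s = (x$i - a$i) / (b$i - a$i)"
    have s01: "0 \<le> s" "s \<le> 1" using xb L by (auto simp: s_def)
    have "1 - s = (b$i - x$i) / (b$i - a$i)" using L by (simp add: s_def field_simps)
    moreover have "?d / (b$i - a$i) \<le> s" unfolding s_def
      using infdist_le_side(1)[OF adm x, of i] L by (simp add: divide_right_mono)
    moreover have "?d / (b$i - a$i) \<le> (b$i - x$i) / (b$i - a$i)"
      using infdist_le_side(2)[OF adm x, of i] L by (simp add: divide_right_mono)
    ultimately have "2 * ?d / (b$i - a$i) \<le> 2 * min s (1 - s)" by simp
    also have "\<dots> \<le> sin (pi * s)" by (rule sin_pi_ge[OF s01])
    also have "pi * s = th a b x i" by (simp add: s_def th_def)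
    finally show "2 * ?d / (b$i - a$i) \<le> sin (th a b x i)" .
  qed
  then show ?thesis by (simp add: phi_th prod_dividef)
qed

lemma part2:
  assumes adm: "admissible_mesh a b h" and t: "0 < t"
    and sm: "(\<Sum>x\<in>Omega_h a b h. t * phi1 a b x * (\<Prod>i\<in>UNIV. h$i)) = 1"
    and x: "x \<in> Omega_h a b h"
  shows "t * phi1 a b (x::real^'n) \<ge> 2 ^ CARD('n) / (\<Prod>i\<in>UNIV. b$i - a$i)^2
                                  * (infdist x (bdry_h a b h)) ^ CARD('n)"
proof -
  let ?O = "Omega_h a b h"
  let ?H = "\<Prod>i\<in>UNIV. h$i"
  let ?V = "\<Prod>i\<in>UNIV. b$i - a$i"
  let ?d = "infdist x (bdry_h a b h)"
  have fin: "finite ?O" by (rule Omega_finite_card(1)[OF adm])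
  have Hp: "0 \<le> ?H" using adm_h[OF adm] by (intro prod_nonneg) (auto intro: less_imp_le)
  have Vp: "0 < ?V" using adm_ab'[OF adm] by (intro prod_pos) auto
  have "(\<Sum>y\<in>?O. phi1 a b y * ?H) \<le> (\<Sum>y\<in>?O. ?H)"
  proof (rule sum_mono)
    fix y assume y: "y \<in> ?O"
    show "phi1 a b y * ?H \<le> ?H"
      using phi_pos[OF adm y] phi_le1[OF adm y] Hp by (intro mult_left_le_one_le) auto
  qed
  also have "\<dots> = real (card ?O) * ?H" by simp
  also have "\<dots> \<le> ?V" by (rule Omega_finite_card(2)[OF adm])
  finally have S: "(\<Sum>y\<in>?O. phi1 a b y * ?H) \<le> ?V" .
  have "t * (\<Sum>y\<in>?O. phi1 a b y * ?H) = (\<Sum>y\<in>?O. t * phi1 a b y * ?H)"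
    by (simp add: sum_distrib_left mult.assoc)
  then have "t * (\<Sum>y\<in>?O. phi1 a b y * ?H) = 1" using sm by simp
  moreover have "t * (\<Sum>y\<in>?O. phi1 a b y * ?H) \<le> t * ?V"
    by (rule mult_left_mono[OF S]) (use t in simp)
  ultimately have "1 \<le> t * ?V" by linarith
  then have t1: "1 / ?V \<le> t" using Vp by (simp add: divide_le_eq mult.commute)
  have ph: "(2 * ?d) ^ CARD('n) / ?V \<le> phi1 a b x" by (rule phi_lower[OF adm x])
  have "(1 / ?V) * ((2 * ?d) ^ CARD('n) / ?V) \<le> t * phi1 a b x"
  proof (rule mult_mono[OF t1 ph])
    show "0 \<le> t" using t by simp
    have "0 \<le> (2 * ?d) ^ CARD('n)" using infdist_nonneg[of x "bdry_h a b h"] by simp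
    then show "0 \<le> (2 * ?d) ^ CARD('n) / ?V" using Vp by simp
  qed
  moreover have "(1 / ?V) * ((2 * ?d) ^ CARD('n) / ?V) = 2 ^ CARD('n) / ?V^2 * ?d ^ CARD('n)"
    by (simp only: power_mult_distrib power2_eq_square) (simp add: divide_simps)
  ultimately show ?thesis by linarith
qed


theorem mainTheorem4:
  fixes a b h :: "real^'n"
  assumes "admissible_mesh a b h"
  shows "first_simple_eigen a b h
           (\<Sum>i\<in>UNIV. 4 / (h$i)^2 * (sin (pi * h$i / (2 * (b$i - a$i))))^2) (phi1 a b)
       \<and> (\<Sum>i\<in>UNIV. 4 / (h$i)^2 * (sin (pi * h$i / (2 * (b$i - a$i))))^2)
           < (\<Sum>i\<in>UNIV. pi^2 / (b$i - a$i)^2)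
       \<and> (\<forall>x\<in>Omega_h a b h. phi1 a b x > 0)
       \<and> (\<forall>t>0. (\<Sum>x\<in>Omega_h a b h. t * phi1 a b x * (\<Prod>i\<in>UNIV. h$i)) = 1 \<longrightarrow>
            (\<forall>x\<in>Omega_h a b h.
               t * phi1 a b x \<ge> 2 ^ CARD('n) / (\<Prod>i\<in>UNIV. b$i - a$i)^2
                                  * (infdist x (bdry_h a b h)) ^ CARD('n)))"
proof (intro conjI)
  note adm = assms
  have de: "dir_eigenfun a b h (lam1 a b h) (phi1 a b)"
    unfolding dir_eigenfun_def
  proof (intro conjI ballI bexI)
    show "\<And>x. x \<in> bdry_h a b h \<Longrightarrow> phi1 a b x = 0" by (rule phi_bdry[OF adm])
    show "phi1 a b (a + h) \<noteq> 0" using phi_pos[OF adm corner_in[OF adm]] by simp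
    show "a + h \<in> Omega_h a b h" by (rule corner_in[OF adm])
    show "\<And>x. - disc_lap h (phi1 a b) x = lam1 a b h * phi1 a b x" by (rule phi_eig)
  qed
  show "first_simple_eigen a b h (lam1 a b h) (phi1 a b)"
    unfolding first_simple_eigen_def dir_eigenvalue_def
    using de min_eig[OF adm] simple_eig[OF adm] by blast
  show "lam1 a b h < (\<Sum>i\<in>UNIV. pi^2 / (b$i - a$i)^2)" by (rule lam_lt[OF adm])
  show "\<forall>x\<in>Omega_h a b h. phi1 a b x > 0" using phi_pos[OF adm] by blast
  show "\<forall>t>0. (\<Sum>x\<in>Omega_h a b h. t * phi1 a b x * (\<Prod>i\<in>UNIV. h$i)) = 1 \<longrightarrow>
            (\<forall>x\<in>Omega_h a b h.
               t * phi1 a b x \<ge> 2 ^ CARD('n) / (\<Prod>i\<in>UNIV. b$i - a$i)^2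
                                  * (infdist x (bdry_h a b h)) ^ CARD('n))"
    using part2[OF adm] by blast
qed

end
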